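(* Let $L$ be a complete semilattice. Then $L$ is shrinkable if and only if for all $S,T\in\Sigma L$ such that the meet $\sigma_L(S)\wedge\sigma_L(T)$ exists in $L$, the meet $S\wedge T$ exists in $\Sigma L$ and $\sigma_L(S\wedge T)=\sigma_L(S)\wedge\sigma_L(T)$.
   Context: A complete semilattice is a poset in which every nonempty subset has a join (written $\sum$; a bottom element need not exist). For $x,x_i\in L$ write $x\le^*\sum_{i\in I}x_i$ if $x\le\sum_{i\in I_0}x_i$ for some finite nonempty $I_0\subseteq I$. $L$ is shrinkable if whenever $x\le\sum_{i\in I}x_i$ there is a family $(y_j)_{j\in J}$ in $L$ with $x=\sum_j y_j$ and $y_j\le^*\sum_{i\in I}x_i$ for every $j$. Suspension: on nonempty subsets of $L$ define the preorder $S\le T$ iff every $s\in S$ satisfies $s\le^*\sum T$ (i.e. $s$ is below the join of finitely many elements of $T$); $\Sigma L$ is the set of equivalence classes of nonempty subsets under the associated equivalence, with the induced partial order (joins in $\Sigma L$ are given by unions). $\sigma_L:\Sigma L\to L$ is $S\mapsto\sum S$. *)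

theory Defs
  imports Main
begin

definition is_join :: "'a::order set \<Rightarrow> 'a \<Rightarrow> bool" where
  "is_join S x \<longleftrightarrow> (\<forall>s\<in>S. s \<le> x) \<and> (\<forall>z. (\<forall>s\<in>S. s \<le> z) \<longrightarrow> x \<le> z)"

definition complete_semilattice :: "'a::order itself \<Rightarrow> bool" where
  "complete_semilattice _ \<longleftrightarrow> (\<forall>S::'a set. S \<noteq> {} \<longrightarrow> (\<exists>x. is_join S x))"

definition jn :: "'a::order set \<Rightarrow> 'a" where
  "jn S = (THE x. is_join S x)"

definition below_fin :: "'a::order \<Rightarrow> 'a set \<Rightarrow> bool" where
  "below_fin x X \<longleftrightarrow> (\<exists>F. finite F \<and> F \<noteq> {} \<and> F \<subseteq> X \<and> x \<le> jn F)"

definition shrinkable :: "'a::order itself \<Rightarrow> bool" where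
  "shrinkable _ \<longleftrightarrow> (\<forall>(x::'a) X. X \<noteq> {} \<longrightarrow> x \<le> jn X \<longrightarrow>
      (\<exists>Y. Y \<noteq> {} \<and> x = jn Y \<and> (\<forall>y\<in>Y. below_fin y X)))"

definition susp_le :: "'a::order set \<Rightarrow> 'a set \<Rightarrow> bool" where
  "susp_le S T \<longleftrightarrow> (\<forall>s\<in>S. below_fin s T)"

definition susp_rel :: "'a::order itself \<Rightarrow> ('a set \<times> 'a set) set" where
  "susp_rel _ = {(S, T). S \<noteq> {} \<and> T \<noteq> {} \<and> susp_le S T \<and> susp_le T S}"

definition Susp :: "'a::order itself \<Rightarrow> 'a set set set" where
  "Susp t = {S::'a set. S \<noteq> {}} // susp_rel t"

definition susp_cls_le :: "'a::order set set \<Rightarrow> 'a set set \<Rightarrow> bool" where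
  "susp_cls_le A B \<longleftrightarrow> (\<exists>S\<in>A. \<exists>T\<in>B. susp_le S T)"

definition sigma :: "'a::order set set \<Rightarrow> 'a" where
  "sigma A = jn (SOME S. S \<in> A)"

definition is_meet :: "'a::order \<Rightarrow> 'a \<Rightarrow> 'a \<Rightarrow> bool" where
  "is_meet a b m \<longleftrightarrow> m \<le> a \<and> m \<le> b \<and> (\<forall>z. z \<le> a \<longrightarrow> z \<le> b \<longrightarrow> z \<le> m)"

definition is_susp_meet :: "'a::order itself \<Rightarrow> 'a set set \<Rightarrow> 'a set set \<Rightarrow> 'a set set \<Rightarrow> bool" where
  "is_susp_meet t A B C \<longleftrightarrow> C \<in> Susp t \<and> susp_cls_le C A \<and> susp_cls_le C B \<and>
     (\<forall>D\<in>Susp t. susp_cls_le D A \<longrightarrow> susp_cls_le D B \<longrightarrow> susp_cls_le D C)"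

end

theory Submission
  imports Defs
begin

lemma jn_is_join:
  assumes cs: "complete_semilattice TYPE('a::order)" and ne: "(S::'a set) \<noteq> {}"
  shows "is_join S (jn S)"
proof -
  obtain x where x: "is_join S x" using cs ne unfolding complete_semilattice_def by blast
  have u: "\<And>y. is_join S y \<Longrightarrow> y = x" using x unfolding is_join_def by (meson order_antisym)
  show ?thesis unfolding jn_def using x u by (metis theI)
qed

lemma jn_upper:
  assumes cs: "complete_semilattice TYPE('a::order)" and "(s::'a) \<in> S"
  shows "s \<le> jn S"
  using jn_is_join[OF cs, of S] assms unfolding is_join_def by blast

lemma jn_least:
  assumes cs: "complete_semilattice TYPE('a::order)" and "(S::'a set) \<noteq> {}"
    and "\<And>s. s \<in> S \<Longrightarrow> s \<le> z"
  shows "jn S \<le> z"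
  using jn_is_join[OF cs, of S] assms unfolding is_join_def by blast

lemma jn_mono_subset:
  assumes cs: "complete_semilattice TYPE('a::order)" and "(A::'a set) \<noteq> {}" and "A \<subseteq> B"
  shows "jn A \<le> jn B"
  using assms by (meson jn_least jn_upper subsetD)

lemma jn_single:
  assumes cs: "complete_semilattice TYPE('a::order)"
  shows "jn {x::'a} = x"
  using jn_least[OF cs, of "{x}" x] jn_upper[OF cs, of x "{x}"] by auto

lemma below_fin_le_jn:
  assumes cs: "complete_semilattice TYPE('a::order)" and "below_fin (x::'a) X"
  shows "x \<le> jn X"
  using assms unfolding below_fin_def by (meson jn_mono_subset order_trans)

lemma below_fin_refl:
  assumes cs: "complete_semilattice TYPE('a::order)" and "(s::'a) \<in> S"
  shows "below_fin s S"
  unfolding below_fin_def using assms jn_single[OF cs, of s]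
  by (intro exI[of _ "{s}"]) auto

lemma below_fin_down:
  assumes "(z::'a::order) \<le> y" and "below_fin y S"
  shows "below_fin z S"
  using assms unfolding below_fin_def by (meson order_trans)

lemma below_fin_trans:
  assumes cs: "complete_semilattice TYPE('a::order)" and "below_fin (x::'a) S" and "susp_le S T"
  shows "below_fin x T"
proof -
  obtain F where F: "finite F" "F \<noteq> {}" "F \<subseteq> S" "x \<le> jn F"
    using assms(2) unfolding below_fin_def by blast
  have "\<forall>f\<in>F. \<exists>G. finite G \<and> G \<noteq> {} \<and> G \<subseteq> T \<and> f \<le> jn G"
    using F(3) assms(3) unfolding susp_le_def below_fin_def by blast
  then obtain g where g: "\<And>f. f \<in> F \<Longrightarrow> finite (g f) \<and> g f \<noteq> {} \<and> g f \<subseteq> T \<and> f \<le> jn (g f)"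
    by metis
  define G where "G = \<Union>(g ` F)"
  have G: "finite G" "G \<noteq> {}" "G \<subseteq> T" using g F unfolding G_def by auto
  have "jn F \<le> jn G"
  proof (rule jn_least[OF cs F(2)])
    fix f assume f: "f \<in> F"
    have "jn (g f) \<le> jn G" using g[OF f] f unfolding G_def by (intro jn_mono_subset[OF cs]) auto
    then show "f \<le> jn G" using g[OF f] by (meson order_trans)
  qed
  then show ?thesis unfolding below_fin_def using G F(4) by (meson order_trans)
qed

lemma susp_le_refl:
  assumes cs: "complete_semilattice TYPE('a::order)"
  shows "susp_le (S::'a set) S"
  unfolding susp_le_def using below_fin_refl[OF cs] by blast

lemma susp_le_trans:
  assumes cs: "complete_semilattice TYPE('a::order)" and "susp_le (S::'a set) T" and "susp_le T U"
  shows "susp_le S U"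
  using assms below_fin_trans[OF cs] unfolding susp_le_def by blast

lemma susp_le_jn:
  assumes cs: "complete_semilattice TYPE('a::order)" and "(S::'a set) \<noteq> {}" and "susp_le S T"
  shows "jn S \<le> jn T"
  using assms below_fin_le_jn[OF cs] unfolding susp_le_def by (meson jn_least)

lemma mem_cls:
  "T \<in> susp_rel t `` {S} \<longleftrightarrow> S \<noteq> {} \<and> T \<noteq> {} \<and> susp_le S T \<and> susp_le T S"
  unfolding susp_rel_def by auto

lemma Susp_cases:
  assumes "A \<in> Susp t"
  obtains S where "S \<noteq> {}" "A = susp_rel t `` {S}"
  using assms unfolding Susp_def quotient_def by blast

lemma cls_in_Susp:
  "S \<noteq> {} \<Longrightarrow> susp_rel t `` {S} \<in> Susp t"
  unfolding Susp_def quotient_def by blast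

lemma sigma_cls:
  assumes cs: "complete_semilattice TYPE('a::order)" and "(S::'a set) \<noteq> {}"
  shows "sigma (susp_rel TYPE('a) `` {S}) = jn S"
proof -
  have "S \<in> susp_rel TYPE('a) `` {S}" using assms susp_le_refl[OF cs] by (simp add: susp_rel_def)
  then have "(SOME S'. S' \<in> susp_rel TYPE('a) `` {S}) \<in> susp_rel TYPE('a) `` {S}"
    by (rule someI)
  moreover define S' where "S' = (SOME S'. S' \<in> susp_rel TYPE('a) `` {S})"
  ultimately have "S' \<in> susp_rel TYPE('a) `` {S}" by simp
  then have S': "S \<noteq> {}" "S' \<noteq> {}" "susp_le S S'" "susp_le S' S"
    unfolding mem_cls by auto
  have "jn S' = jn S" using S' susp_le_jn[OF cs] by (meson order_antisym)
  then show ?thesis unfolding sigma_def S'_def[symmetric] by simp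
qed

lemma cls_le:
  assumes cs: "complete_semilattice TYPE('a::order)" and "(S::'a set) \<noteq> {}" and "T \<noteq> {}"
  shows "susp_cls_le (susp_rel TYPE('a) `` {S}) (susp_rel TYPE('a) `` {T}) \<longleftrightarrow> susp_le S T"
proof
  assume "susp_cls_le (susp_rel TYPE('a) `` {S}) (susp_rel TYPE('a) `` {T})"
  then obtain S' T' where "S' \<in> susp_rel TYPE('a) `` {S}" "T' \<in> susp_rel TYPE('a) `` {T}"
    "susp_le S' T'" unfolding susp_cls_le_def by blast
  then show "susp_le S T" by (meson mem_cls susp_le_trans[OF cs])
next
  assume "susp_le S T"
  moreover have "S \<in> susp_rel TYPE('a) `` {S}" "T \<in> susp_rel TYPE('a) `` {T}"
    using assms susp_le_refl[OF cs] by (simp_all add: susp_rel_def)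
  ultimately show "susp_cls_le (susp_rel TYPE('a) `` {S}) (susp_rel TYPE('a) `` {T})"
    unfolding susp_cls_le_def by blast
qed

theorem mainTheorem3:
  assumes "complete_semilattice TYPE('a::order)"
  shows "shrinkable TYPE('a) \<longleftrightarrow>
    (\<forall>A\<in>Susp TYPE('a). \<forall>B\<in>Susp TYPE('a). \<forall>m::'a.
       is_meet (sigma A) (sigma B) m \<longrightarrow>
       (\<exists>C. is_susp_meet TYPE('a) A B C \<and> sigma C = m))"
proof
  note cs = assms
  assume shr: "shrinkable TYPE('a)"
  show "\<forall>A\<in>Susp TYPE('a). \<forall>B\<in>Susp TYPE('a). \<forall>m::'a.
       is_meet (sigma A) (sigma B) m \<longrightarrow>
       (\<exists>C. is_susp_meet TYPE('a) A B C \<and> sigma C = m)"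
  proof (intro ballI allI impI)
    fix A B and m :: 'a
    assume A: "A \<in> Susp TYPE('a)" and B: "B \<in> Susp TYPE('a)"
      and mt: "is_meet (sigma A) (sigma B) m"
    obtain S :: "'a set" where S: "S \<noteq> {}" "A = susp_rel TYPE('a) `` {S}" using A by (rule Susp_cases)
    obtain T :: "'a set" where T: "T \<noteq> {}" "B = susp_rel TYPE('a) `` {T}" using B by (rule Susp_cases)
    have mt': "is_meet (jn S) (jn T) m" using mt S T sigma_cls[OF cs] by simp
    define U where "U = {u. below_fin u S \<and> below_fin u T}"
    have "m \<le> jn S" using mt' unfolding is_meet_def by simp
    from shr[unfolded shrinkable_def, rule_format, OF S(1) this]
    obtain Y where Y: "Y \<noteq> {}" "m = jn Y" "\<forall>y\<in>Y. below_fin y S"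
      by blast
    have Zy: "\<exists>Z. Z \<noteq> {} \<and> y = jn Z \<and> Z \<subseteq> U" if y: "y \<in> Y" for y
    proof -
      have "y \<le> jn T" using jn_upper[OF cs y] Y(2) mt' unfolding is_meet_def
        by (meson order_trans)
      from shr[unfolded shrinkable_def, rule_format, OF T(1) this]
      obtain Z where Z: "Z \<noteq> {}" "y = jn Z" "\<forall>z\<in>Z. below_fin z T"
        by blast
      have "Z \<subseteq> U" unfolding U_def
      proof
        fix z assume z: "z \<in> Z"
        have "z \<le> y" using jn_upper[OF cs z] Z(2) by simp
        then show "z \<in> {u. below_fin u S \<and> below_fin u T}"
          using below_fin_down Y(3) y Z(3) z by blast
      qed
      then show ?thesis using Z by blast
    qed
    have Une: "U \<noteq> {}" using Zy Y(1) by blast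
    have "jn U \<le> m"
    proof (rule jn_least[OF cs Une])
      fix u assume "u \<in> U"
      then have "u \<le> jn S" "u \<le> jn T" unfolding U_def using below_fin_le_jn[OF cs] by auto
      then show "u \<le> m" using mt' unfolding is_meet_def by blast
    qed
    moreover have "m \<le> jn U"
      unfolding Y(2)
    proof (rule jn_least[OF cs Y(1)])
      fix y assume "y \<in> Y"
      then obtain Z where "Z \<noteq> {}" "y = jn Z" "Z \<subseteq> U" using Zy by blast
      then show "y \<le> jn U" using jn_mono_subset[OF cs] by simp
    qed
    ultimately have mU: "jn U = m" by simp
    define C where "C = susp_rel TYPE('a) `` {U}"
    have UleS: "susp_le U S" and UleT: "susp_le U T" unfolding U_def susp_le_def by auto
    have "is_susp_meet TYPE('a) A B C"
      unfolding is_susp_meet_def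
    proof (intro conjI ballI impI)
      show "C \<in> Susp TYPE('a)" unfolding C_def using Une by (rule cls_in_Susp)
      show "susp_cls_le C A" unfolding C_def S(2) using cls_le[OF cs Une S(1)] UleS by simp
      show "susp_cls_le C B" unfolding C_def T(2) using cls_le[OF cs Une T(1)] UleT by simp
      fix D assume D: "D \<in> Susp TYPE('a)" and DA: "susp_cls_le D A" and DB: "susp_cls_le D B"
      obtain V :: "'a set" where V: "V \<noteq> {}" "D = susp_rel TYPE('a) `` {V}" using D by (rule Susp_cases)
      have "susp_le V S" using DA V S cls_le[OF cs V(1) S(1)] by simp
      moreover have "susp_le V T" using DB V T cls_le[OF cs V(1) T(1)] by simp
      ultimately have "susp_le V U" unfolding susp_le_def
      proof (intro ballI)
        fix v assume "\<forall>s\<in>V. below_fin s S" "\<forall>s\<in>V. below_fin s T" "v \<in> V"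
        then have "v \<in> U" unfolding U_def by simp
        then show "below_fin v U" by (rule below_fin_refl[OF cs])
      qed
      then show "susp_cls_le D C" unfolding C_def V(2) using cls_le[OF cs V(1) Une] by simp
    qed
    moreover have "sigma C = m" unfolding C_def using sigma_cls[OF cs Une] mU by simp
    ultimately show "\<exists>C. is_susp_meet TYPE('a) A B C \<and> sigma C = m" by blast
  qed
next
  note cs = assms
  assume H: "\<forall>A\<in>Susp TYPE('a). \<forall>B\<in>Susp TYPE('a). \<forall>m::'a.
       is_meet (sigma A) (sigma B) m \<longrightarrow>
       (\<exists>C. is_susp_meet TYPE('a) A B C \<and> sigma C = m)"
  show "shrinkable TYPE('a)" unfolding shrinkable_def
  proof (intro allI impI)
    fix x :: 'a and X assume Xne: "X \<noteq> {}" and xX: "x \<le> jn X"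
    define A where "A = susp_rel TYPE('a) `` {X}"
    define B where "B = susp_rel TYPE('a) `` {{x}}"
    have A: "A \<in> Susp TYPE('a)" unfolding A_def using Xne by (rule cls_in_Susp)
    have B: "B \<in> Susp TYPE('a)" unfolding B_def by (rule cls_in_Susp) simp
    have sA: "sigma A = jn X" unfolding A_def using sigma_cls[OF cs Xne] .
    have sB: "sigma B = x" unfolding B_def using sigma_cls[OF cs, of "{x}"] jn_single[OF cs] by simp
    have "is_meet (sigma A) (sigma B) x" unfolding sA sB is_meet_def using xX by simp
    from H[rule_format, OF A B this]
    obtain C where C: "is_susp_meet TYPE('a) A B C" "sigma C = x" by blast
    from C(1) have CS: "C \<in> Susp TYPE('a)" and CA: "susp_cls_le C A" unfolding is_susp_meet_def by simp_all
    obtain U :: "'a set" where U: "U \<noteq> {}" "C = susp_rel TYPE('a) `` {U}" using CS by (rule Susp_cases)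
    have "susp_le U X" using CA U cls_le[OF cs U(1) Xne] unfolding A_def by simp
    moreover have "x = jn U" using C(2) U sigma_cls[OF cs U(1)] by simp
    ultimately show "\<exists>Y. Y \<noteq> {} \<and> x = jn Y \<and> (\<forall>y\<in>Y. below_fin y X)"
      using U(1) unfolding susp_le_def by blast
  qed
qed

end
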